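(* Let $A\in\mathbb{R}^{m\times d}$ have the phase retrieval property in $\mathbb{R}^d$. Then for any $b\in\mathbb{R}^m$, the number of solutions of $\min_{x\in\mathbb{R}^d}\|\,|Ax|-b\,\|^2$ is finite.
   Context: $\|\cdot\|$ is the Euclidean norm and $|Ax|$ the entrywise absolute value. $A$ has the phase retrieval property in $\mathbb{R}^d$ if for all $x,y\in\mathbb{R}^d$, $|Ax|=|Ay|$ implies $x=\pm y$. *)

theory Defs
  imports "HOL-Analysis.Analysis"
begin

definition vabs :: "real ^ 'm \<Rightarrow> real ^ 'm" where
  "vabs v = (\<chi> i. \<bar>v $ i\<bar>)"

definition phase_retrieval :: "real ^ 'd ^ 'm \<Rightarrow> bool" where
  "phase_retrieval A \<longleftrightarrow>
     (\<forall>x y :: real ^ 'd. vabs (A *v x) = vabs (A *v y) \<longrightarrow> x = y \<or> x = - y)"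

definition pr_solutions :: "real ^ 'd ^ 'm \<Rightarrow> real ^ 'm \<Rightarrow> (real ^ 'd) set" where
  "pr_solutions A b =
     {x. \<forall>y. (norm (vabs (A *v x) - b))\<^sup>2 \<le> (norm (vabs (A *v y) - b))\<^sup>2}"

end

theory Submission
  imports Defs
begin

lemma para_id:
  fixes p q :: "'a::real_inner"
  shows "(norm ((1/2) *\<^sub>R (p + q)))\<^sup>2 = ((norm p)\<^sup>2 + (norm q)\<^sup>2) / 2 - (norm (p - q))\<^sup>2 / 4"
  by (simp add: power2_norm_eq_inner inner_add_left inner_add_right inner_diff_left
      inner_diff_right inner_commute algebra_simps) (simp add: field_simps)

lemma fiber_eq:
  fixes A :: "real ^ 'd ^ 'm" and b :: "real ^ 'm"
  assumes x: "x \<in> pr_solutions A b" and y: "y \<in> pr_solutions A b"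
    and sg: "\<And>i. ((A *v x) $ i \<ge> 0) = ((A *v y) $ i \<ge> 0)"
  shows "vabs (A *v x) = vabs (A *v y)"
proof -
  let ?u = "vabs (A *v x)" and ?v = "vabs (A *v y)"
  define z where "z = (1/2) *\<^sub>R (x + y)"
  have vz: "vabs (A *v z) = (1/2) *\<^sub>R (?u + ?v)"
  proof -
    have "\<bar>(1/2) * (a + c)\<bar> = (1/2) * (\<bar>a\<bar> + \<bar>c\<bar>)" if "(a \<ge> 0) = (c \<ge> (0::real))" for a c
      using that by auto
    then show ?thesis
      using sg by (simp add: z_def vabs_def vec_eq_iff matrix_vector_right_distrib
          matrix_vector_mult_scaleR)
  qed
  have e: "vabs (A *v z) - b = (1/2) *\<^sub>R ((?u - b) + (?v - b))"
    unfolding vz by (simp add: vec_eq_iff algebra_simps)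
  have fx: "(norm (?u - b))\<^sup>2 \<le> (norm (?v - b))\<^sup>2" using x y unfolding pr_solutions_def by auto
  have fy: "(norm (?v - b))\<^sup>2 \<le> (norm (?u - b))\<^sup>2" using x y unfolding pr_solutions_def by auto
  have fz: "(norm (?u - b))\<^sup>2 \<le> (norm (vabs (A *v z) - b))\<^sup>2" using x unfolding pr_solutions_def by auto
  have "(?u - b) - (?v - b) = ?u - ?v" by simp
  then have "(norm (vabs (A *v z) - b))\<^sup>2 = ((norm (?u - b))\<^sup>2 + (norm (?v - b))\<^sup>2) / 2 - (norm (?u - ?v))\<^sup>2 / 4"
    unfolding e para_id by simp
  moreover have "N \<le> 0" if "U \<le> V" "V \<le> U" "U \<le> Z" "Z = (U + V) / 2 - N / 4" for U V Z N :: real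
    using that by (simp add: field_simps)
  ultimately have "(norm (?u - ?v))\<^sup>2 \<le> 0" using fx fy fz by blast
  then show ?thesis by simp
qed

theorem theorem3p3:
  fixes A :: "real ^ 'd ^ 'm" and b :: "real ^ 'm"
  assumes "phase_retrieval A"
  shows "finite (pr_solutions A b)"
proof -
  define sg where "sg x = (\<chi> i. (A *v x) $ i \<ge> 0)" for x :: "real ^ 'd"
  define F where "F s = {x \<in> pr_solutions A b. sg x = s}" for s
  have fin: "finite (F s)" for s
  proof (cases "F s = {}")
    case True then show ?thesis by simp
  next
    case False
    then obtain x0 where x0: "x0 \<in> F s" by auto
    have "F s \<subseteq> {x0, - x0}"
    proof
      fix y assume y: "y \<in> F s"
      have "vabs (A *v y) = vabs (A *v x0)"
        apply (rule fiber_eq)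
        using x0 y unfolding F_def sg_def by (auto simp: vec_eq_iff)
      then show "y \<in> {x0, - x0}" using assms unfolding phase_retrieval_def by auto
    qed
    then show ?thesis by (rule finite_subset) simp
  qed
  have "pr_solutions A b \<subseteq> (\<Union>s\<in>UNIV. F s)" unfolding F_def by auto
  moreover have "finite (\<Union>s\<in>(UNIV :: (bool ^ 'm) set). F s)" using fin by simp
  ultimately show ?thesis by (rule finite_subset)
qed

end
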